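(* Let $\mathbb{A}$ be a non-empty set. A word $x\in\mathbb{A}^\omega$ is ultimately periodic if and only if for every finite coloring $\varphi:\mathbb{A}^+\to C$ there exists a suffix of $x$ which admits a shift invariant $\varphi$-monochromatic factorization.
   Context: $x$ is ultimately periodic if $x=uv^\omega$ for some finite words $u$ and non-empty $v$. $T$ is the shift, $T(x_0x_1\cdots)=x_1x_2\cdots$. A factorization $z=V_0V_1V_2\cdots$ with all $V_i\in\mathbb{A}^+$ is $\varphi$-monochromatic if there is $c\in C$ with $\varphi(V_i)=c$ for all $i$. It is shift invariant if for every positive integer $j$, the induced factorization $T^j(z)=W_0W_1W_2\cdots$ with $|W_i|=|V_i|$ for all $i$ is also $\varphi$-monochromatic (the color may depend on $j$). *)

theory Defs
  imports "HOL-Library.Omega_Words_Fun"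
begin

text \<open>A factorization z = V0 V1 V2 ... into non-empty
  finite words is encoded by its length sequence l (all l i > 0); the i-th
  factor is z[cut l i -> cut l (i+1)] where cut l i is the sum of the first i lengths.\<close>

definition ultimately_periodic :: "'a word \<Rightarrow> bool" where
  "ultimately_periodic x \<longleftrightarrow> (\<exists>u v. v \<noteq> [] \<and> x = u \<frown> v\<^sup>\<omega>)"

definition cut :: "(nat \<Rightarrow> nat) \<Rightarrow> nat \<Rightarrow> nat" where
  "cut l i = (\<Sum>k<i. l k)"

definition factor :: "'a word \<Rightarrow> (nat \<Rightarrow> nat) \<Rightarrow> nat \<Rightarrow> 'a list" where
  "factor z l i = z [cut l i \<rightarrow> cut l (Suc i)]"

definition is_factorization :: "(nat \<Rightarrow> nat) \<Rightarrow> bool" where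
  "is_factorization l \<longleftrightarrow> (\<forall>i. 0 < l i)"

definition monochromatic :: "('a list \<Rightarrow> 'c) \<Rightarrow> 'a word \<Rightarrow> (nat \<Rightarrow> nat) \<Rightarrow> bool" where
  "monochromatic \<phi> z l \<longleftrightarrow> (\<exists>c. \<forall>i. \<phi> (factor z l i) = c)"

definition shift_invariant :: "('a list \<Rightarrow> 'c) \<Rightarrow> 'a word \<Rightarrow> (nat \<Rightarrow> nat) \<Rightarrow> bool" where
  "shift_invariant \<phi> z l \<longleftrightarrow> (\<forall>j>0. monochromatic \<phi> (suffix j z) l)"

definition finite_coloring :: "('a list \<Rightarrow> 'c) \<Rightarrow> bool" where
  "finite_coloring \<phi> \<longleftrightarrow> finite (\<phi> ` {w. w \<noteq> []})"

end

theory Submission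
  imports Defs "HOL-Library.Countable_Set"
begin

definition per :: "'b word \<Rightarrow> bool" where
  "per y \<longleftrightarrow> (\<exists>k p. 0 < p \<and> (\<forall>n\<ge>k. y (n+p) = y n))"

lemma per_mult:
  fixes q :: nat
  assumes "\<forall>n\<ge>k. y (n+p) = y n" "n \<ge> k"
  shows "y (n + q*p) = y n"
proof (induction q)
  case (Suc q)
  have "y (n + Suc q * p) = y ((n + q*p) + p)" by (simp add: algebra_simps)
  also have "\<dots> = y (n + q*p)" using assms by auto
  finally show ?case using Suc by simp
qed simp

lemma up_iff: "ultimately_periodic y \<longleftrightarrow> per y"
proof
  assume "ultimately_periodic y"
  then obtain u v where v: "v \<noteq> []" and y: "y = u \<frown> v\<^sup>\<omega>"
    unfolding ultimately_periodic_def by blast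
  have "\<forall>n\<ge>length u. y (n + length v) = y n"
  proof (intro allI impI)
    fix n assume "n \<ge> length u"
    then have e: "n + length v - length u = (n - length u) + length v" by simp
    have "(n + length v - length u) mod length v = (n - length u) mod length v"
      unfolding e by simp
    then show "y (n + length v) = y n" using v \<open>n \<ge> length u\<close> by (simp add: y)
  qed
  then show "per y" unfolding per_def using v by blast
next
  assume "per y"
  then obtain k p where p: "0 < p" and h: "\<forall>n\<ge>k. y (n+p) = y n" unfolding per_def by blast
  define u where "u = y [0 \<rightarrow> k]"
  define v where "v = y [k \<rightarrow> k+p]"
  have lv: "length v = p" "v \<noteq> []" using p by (auto simp: v_def)
  have lu: "length u = k" by (simp add: u_def)
  have yuv: "y = u \<frown> v\<^sup>\<omega>"
  proof
    fix n
    show "y n = (u \<frown> v\<^sup>\<omega>) n"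
    proof (cases "n < k")
      case True then show ?thesis by (simp add: u_def)
    next
      case False
      have e: "(k + (n-k) mod p) + ((n-k) div p) * p = n"
        using False mod_div_mult_eq[of "n-k" p] by linarith
      have "y ((k + (n-k) mod p) + ((n-k) div p) * p) = y (k + (n-k) mod p)"
        by (rule per_mult[OF h]) simp
      then have "y n = y (k + (n-k) mod p)" unfolding e .
      moreover have "(u \<frown> v\<^sup>\<omega>) n = v ! ((n-k) mod p)"
        using False lv lu p by simp
      moreover have "v ! ((n-k) mod p) = y (k + (n-k) mod p)"
        unfolding v_def using p by (simp add: subsequence_def)
      ultimately show ?thesis by simp
    qed
  qed
  show "ultimately_periodic y" unfolding ultimately_periodic_def
    by (rule exI[of _ u], rule exI[of _ v]) (use lv yuv in simp)
qed

lemma countable_up: "countable {y :: bool word. ultimately_periodic y}"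
proof -
  have "{y :: bool word. ultimately_periodic y} \<subseteq> (\<lambda>(u,v). u \<frown> v\<^sup>\<omega>) ` UNIV"
    unfolding ultimately_periodic_def by auto
  moreover have "countable ((\<lambda>(u::bool list,v::bool list). u \<frown> v\<^sup>\<omega>) ` UNIV)" by simp
  ultimately show ?thesis by (rule countable_subset)
qed

lemma uncountable_nat_sets: "\<not> countable (UNIV :: nat set set)"
proof
  assume "countable (UNIV :: nat set set)"
  then obtain f :: "nat \<Rightarrow> nat set" where "range f = UNIV"
    using uncountable_def[of "UNIV :: nat set set"] by auto
  then have "f ` UNIV = Pow UNIV" by simp
  then show False using Cantors_theorem[of "UNIV :: nat set"] by auto
qed

lemma exists_coloring:
  assumes np: "\<not> per x"
  shows "\<exists>f :: 'a \<Rightarrow> nat. finite (range f) \<and> \<not> per (f \<circ> x)"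
proof (cases "finite (range x)")
  case True
  then obtain g :: "'a \<Rightarrow> nat" where g: "inj_on g (range x)"
    using finite_imp_inj_to_nat_seg[OF True] by auto
  define f where "f a = (if a \<in> range x then g a else 0)" for a
  have "range f \<subseteq> insert 0 (g ` range x)" by (auto simp: f_def)
  then have "finite (range f)" by (rule finite_subset) (simp add: True)
  moreover have "\<not> per (f \<circ> x)"
  proof
    assume "per (f \<circ> x)"
    then obtain k p where "0 < p" "\<forall>n\<ge>k. f (x (n+p)) = f (x n)" unfolding per_def by auto
    moreover have "f (x (n+p)) = f (x n) \<Longrightarrow> x (n+p) = x n" for n
      using g by (auto simp: f_def inj_on_def)
    ultimately have "per x" unfolding per_def by (intro exI[of _ k] exI[of _ p]) auto
    then show False using np by simp
  qed
  ultimately show ?thesis by blast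
next
  case False
  then obtain h :: "nat \<Rightarrow> 'a" where h: "inj h" "range h \<subseteq> range x"
    unfolding infinite_iff_countable_subset by blast
  have "\<exists>M. \<not> per (\<lambda>n. x n \<in> M)"
  proof (rule ccontr)
    assume "\<not> ?thesis"
    then have all: "per (\<lambda>n. x n \<in> M)" for M by simp
    define \<Phi> where "\<Phi> T = (\<lambda>n. x n \<in> h ` T)" for T :: "nat set"
    have "inj \<Phi>"
    proof
      fix S T assume e: "\<Phi> S = \<Phi> T"
      show "S = T"
      proof (rule set_eqI)
        fix m
        have "h m \<in> range x" using h(2) by auto
        then obtain n where n: "x n = h m" by auto
        have "(x n \<in> h ` S) = (x n \<in> h ` T)" using fun_cong[OF e, of n]
          by (simp add: \<Phi>_def)
        then have "(h m \<in> h ` S) = (h m \<in> h ` T)" by (simp only: n)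
        then show "m \<in> S \<longleftrightarrow> m \<in> T" using h(1) by (auto simp: inj_def)
      qed
    qed
    moreover have "range \<Phi> \<subseteq> {y :: bool word. ultimately_periodic y}"
      using all by (auto simp: \<Phi>_def up_iff)
    moreover have "countable (range \<Phi>)"
      by (rule countable_subset[OF calculation(2) countable_up])
    ultimately have "countable (UNIV :: nat set set)"
      using countable_image_inj_on[of \<Phi> UNIV] by auto
    then show False using uncountable_nat_sets by blast
  qed
  then obtain M where M: "\<not> per (\<lambda>n. x n \<in> M)" by blast
  define f :: "'a \<Rightarrow> nat" where "f a = (if a \<in> M then 1 else 0)" for a
  have "range f \<subseteq> {0,1}" by (auto simp: f_def)
  then have "finite (range f)" by (rule finite_subset) simp
  moreover have "\<not> per (f \<circ> x)"
  proof
    assume "per (f \<circ> x)"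
    then obtain k p where "0 < p" "\<forall>n\<ge>k. f (x (n+p)) = f (x n)" unfolding per_def by auto
    moreover have "f (x (n+p)) = f (x n) \<Longrightarrow> (x (n+p) \<in> M) = (x n \<in> M)" for n
      by (auto simp: f_def split: if_splits)
    ultimately have "per (\<lambda>n. x n \<in> M)" unfolding per_def by (intro exI[of _ k] exI[of _ p]) auto
    then show False using M by simp
  qed
  ultimately show ?thesis by blast
qed

lemma cut_const: "cut (\<lambda>_. p) i = i * p"
  by (simp add: cut_def)

theorem proposition3p3:
  fixes x :: "'a word"
  shows "ultimately_periodic x \<longleftrightarrow>
    (\<forall>\<phi> :: 'a list \<Rightarrow> nat. finite_coloring \<phi> \<longrightarrow>
       (\<exists>k l. is_factorization l \<and> monochromatic \<phi> (suffix k x) l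
              \<and> shift_invariant \<phi> (suffix k x) l))"
proof
  assume "ultimately_periodic x"
  then have "per x" unfolding up_iff .
  then obtain k p where p: "0 < p" and h: "\<forall>n\<ge>k. x (n+p) = x n"
    unfolding per_def by blast
  let ?l = "\<lambda>_::nat. p"
  have fac: "factor (suffix (k+j) x) ?l i = x [k+j \<rightarrow> k+j+p]" for i j
  proof -
    have "factor (suffix (k+j) x) ?l i = x [k+j+i*p \<rightarrow> k+j+i*p+p]"
      by (simp add: factor_def cut_const algebra_simps)
    also have "\<dots> = x [k+j \<rightarrow> k+j+p]"
      unfolding subsequence_def
    proof (rule nth_equalityI)
      fix t assume "t < length (map x [k+j+i*p..<k+j+i*p+p])"
      then have "t < p" by simp
      have "x ((k+j+t) + i*p) = x (k+j+t)" by (rule per_mult[OF h]) simp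
      then show "map x [k+j+i*p..<k+j+i*p+p] ! t = map x [k+j..<k+j+p] ! t"
        using \<open>t < p\<close> by (simp add: algebra_simps)
    qed simp
    finally show ?thesis .
  qed
  show "\<forall>\<phi> :: 'a list \<Rightarrow> nat. finite_coloring \<phi> \<longrightarrow>
       (\<exists>k l. is_factorization l \<and> monochromatic \<phi> (suffix k x) l
              \<and> shift_invariant \<phi> (suffix k x) l)"
  proof (intro allI impI exI conjI)
    fix \<phi> :: "'a list \<Rightarrow> nat"
    show "is_factorization ?l" using p by (simp add: is_factorization_def)
    show "monochromatic \<phi> (suffix k x) ?l"
      unfolding monochromatic_def using fac[of 0] by simp
    show "shift_invariant \<phi> (suffix k x) ?l"
      unfolding shift_invariant_def monochromatic_def using fac by simp
  qed
next
  assume H: "\<forall>\<phi> :: 'a list \<Rightarrow> nat. finite_coloring \<phi> \<longrightarrow>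
       (\<exists>k l. is_factorization l \<and> monochromatic \<phi> (suffix k x) l
              \<and> shift_invariant \<phi> (suffix k x) l)"
  show "ultimately_periodic x"
  proof (rule ccontr)
    assume "\<not> ultimately_periodic x"
    then have "\<not> per x" unfolding up_iff .
    then obtain f :: "'a \<Rightarrow> nat" where f: "finite (range f)" "\<not> per (f \<circ> x)"
      using exists_coloring by blast
    define \<phi> where "\<phi> w = f (hd w)" for w :: "'a list"
    have "finite_coloring \<phi>"
      unfolding finite_coloring_def
      by (rule finite_subset[OF _ f(1)]) (auto simp: \<phi>_def)
    then obtain k l where l: "is_factorization l" and mono: "monochromatic \<phi> (suffix k x) l"
      and si: "shift_invariant \<phi> (suffix k x) l" using H[rule_format, OF \<open>finite_coloring \<phi>\<close>] by blast
    have mj: "monochromatic \<phi> (suffix (k+j) x) l" for j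
      using mono si by (cases "j = 0") (auto simp: shift_invariant_def)
    have l0: "0 < l 0" "0 < l (Suc 0)" using l by (auto simp: is_factorization_def)
    have eq: "f (x (k+j+l 0)) = f (x (k+j))" for j
    proof -
      obtain c where c: "\<forall>i. \<phi> (factor (suffix (k+j) x) l i) = c"
        using mj[of j] unfolding monochromatic_def by blast
      have "\<phi> (factor (suffix (k+j) x) l 0) = f (x (k+j))"
        using l0 by (simp add: \<phi>_def factor_def cut_def subsequence_def upt_rec)
      moreover have "\<phi> (factor (suffix (k+j) x) l 1) = f (x (k+j+l 0))"
        using l0 by (simp add: \<phi>_def factor_def cut_def subsequence_def upt_rec)
      moreover have "\<phi> (factor (suffix (k+j) x) l 1) = \<phi> (factor (suffix (k+j) x) l 0)"
        using c by simp
      ultimately show ?thesis by simp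
    qed
    have "per (f \<circ> x)" unfolding per_def
    proof (intro exI conjI allI impI)
      show "0 < l 0" using l0 by simp
      fix n assume "k \<le> n"
      then show "(f \<circ> x) (n + l 0) = (f \<circ> x) n" using eq[of "n-k"] by simp
    qed
    then show False using f(2) by simp
  qed
qed

end
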